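(* In the setting of the blurring mean-shift iteration with $f$ PDD and fixed positive weights, let $C_1^{(t)}$ be the convex hull of $\{x_1^{(t)},\dots,x_N^{(t)}\}$ and let $C_1=\bigcap_{t\ge 0}C_1^{(t)}$. Then for every vertex (extreme point) $v$ of $C_1$ there exists at least one index $j\in\{1,\dots,N\}$ such that $\lim_{t\to\infty}x_j^{(t)}=v$.
   Context: Setting: $x_1,\dots,x_N\in\mathbb{R}^p$, fixed weights $w_1,\dots,w_N>0$, and $f:\mathbb{R}^p\to[0,1]$ PDD, meaning: $f(u)=1$ iff $u=0$; $f(u)=\varphi(\|u\|)$ for some $\varphi:[0,\infty)\to[0,1]$; $\varphi$ is decreasing (non-increasing). The blurring mean-shift iteration is $x_i^{(0)}=x_i$ and $x_i^{(t+1)}=\frac{\sum_{j=1}^N f(x_i^{(t)}-x_j^{(t)})w_jx_j^{(t)}}{\sum_{j=1}^N f(x_i^{(t)}-x_j^{(t)})w_j}$. The convex hulls $C_1^{(t)}$ are nested decreasing in $t$. *)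

theory Defs
  imports "HOL-Analysis.Analysis"
begin

definition PDD :: "('a::real_normed_vector \<Rightarrow> real) \<Rightarrow> bool" where
  "PDD f \<longleftrightarrow>
     (\<forall>u. f u = 1 \<longleftrightarrow> u = 0) \<and>
     (\<exists>\<phi> :: real \<Rightarrow> real.
        (\<forall>r\<ge>0. 0 \<le> \<phi> r \<and> \<phi> r \<le> 1) \<and>
        (\<forall>r s. 0 \<le> r \<longrightarrow> r \<le> s \<longrightarrow> \<phi> s \<le> \<phi> r) \<and>
        (\<forall>u. f u = \<phi> (norm u)))"

fun bms :: "nat \<Rightarrow> ('a::real_vector \<Rightarrow> real) \<Rightarrow> (nat \<Rightarrow> real) \<Rightarrow> (nat \<Rightarrow> 'a) \<Rightarrow> nat \<Rightarrow> nat \<Rightarrow> 'a" where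
  "bms N f w x 0 i = x i"
| "bms N f w x (Suc t) i =
     (\<Sum>j<N. (f (bms N f w x t i - bms N f w x t j) * w j) *\<^sub>R bms N f w x t j) /\<^sub>R
     (\<Sum>j<N. f (bms N f w x t i - bms N f w x t j) * w j)"

end

theory Submission imports Defs begin

lemma nested_ne:
  fixes C :: "nat \<Rightarrow> nat set"
  assumes fin: "\<And>t. finite (C t)" and ne: "\<And>t. C t \<noteq> {}" and mono: "\<And>t. C (Suc t) \<subseteq> C t"
  shows "\<exists>j T. \<forall>t\<ge>T. j \<in> C t"
proof -
  have anti: "s \<le> t \<Longrightarrow> C t \<subseteq> C s" for s t
    by (rule lift_Suc_antimono_le[of C]) (use mono in auto)
  obtain t0 where t0: "\<forall>t. card (C t0) \<le> card (C t)"
    using ex_has_least_nat[of "\<lambda>_. True" 0 "\<lambda>t. card (C t)"] by blast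
  obtain j where j: "j \<in> C t0" using ne by blast
  have "\<forall>t\<ge>t0. j \<in> C t"
  proof (intro allI impI)
    fix t assume "t \<ge> t0"
    then have sub: "C t \<subseteq> C t0" by (rule anti)
    have "card (C t) = card (C t0)" using t0 card_mono[OF fin sub] by (metis le_antisym)
    then have "C t = C t0" using card_subset_eq[OF fin sub] by simp
    then show "j \<in> C t" using j by simp
  qed
  then show ?thesis by blast
qed

locale bsetup =
  fixes N :: nat and f :: "'a::euclidean_space \<Rightarrow> real" and w :: "nat \<Rightarrow> real" and x :: "nat \<Rightarrow> 'a"
  assumes f0: "\<And>u. 0 \<le> f u" and f1: "\<And>u. f u \<le> 1" and fz: "f 0 = 1"
    and wpos: "\<And>j. j < N \<Longrightarrow> w j > 0"
begin

abbreviation "X \<equiv> bms N f w x"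
abbreviation "Z t i \<equiv> (\<Sum>j<N. f (X t i - X t j) * w j)"
abbreviation "W \<equiv> (\<Sum>j<N. w j)"

lemma Z_ge: "i < N \<Longrightarrow> w i \<le> Z t i"
proof -
  assume i: "i < N"
  have "f (X t i - X t i) * w i \<le> Z t i"
    by (rule member_le_sum) (use i f0 wpos less_imp_le in \<open>auto intro!: mult_nonneg_nonneg\<close>)
  thus ?thesis using fz by simp
qed

lemma Z_pos: "i < N \<Longrightarrow> 0 < Z t i"
  using Z_ge wpos by (meson less_le_trans)

lemma Z_le: "Z t i \<le> W"
  by (rule sum_mono) (use f1 wpos in \<open>auto intro: mult_left_le_one_le less_imp_le f0\<close>)

lemma step_repr: "i < N \<Longrightarrow> X (Suc t) i = (\<Sum>j<N. (f (X t i - X t j) * w j / Z t i) *\<^sub>R X t j)"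
  by (simp add: scaleR_sum_right divide_inverse_commute)

declare bms.simps(2)[simp del]

lemma coeff_sum: "i < N \<Longrightarrow> (\<Sum>j<N. f (X t i - X t j) * w j / Z t i) = 1"
  using Z_pos[of i t] by (simp add: sum_divide_distrib[symmetric])

lemma coeff_nonneg: "i < N \<Longrightarrow> j < N \<Longrightarrow> 0 \<le> f (X t i - X t j) * w j / Z t i"
  using Z_pos[of i t] f0 wpos[of j] by simp

lemma step_in_hull: "i < N \<Longrightarrow> X (Suc t) i \<in> convex hull (X t ` {..<N})"
proof -
  assume i: "i < N"
  have "(\<Sum>j<N. (f (X t i - X t j) * w j / Z t i) *\<^sub>R X t j) \<in> convex hull (X t ` {..<N})"
    by (rule convex_sum) (use i in \<open>auto simp del: bms.simps simp: coeff_sum coeff_nonneg hull_inc\<close>)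
  then show ?thesis by (simp only: step_repr[OF i])
qed

lemma hull_mono_step: "convex hull (X (Suc t) ` {..<N}) \<subseteq> convex hull (X t ` {..<N})"
  by (rule hull_minimal) (auto simp del: bms.simps simp: step_in_hull)

lemma hull_antimono: "s \<le> t \<Longrightarrow> convex hull (X t ` {..<N}) \<subseteq> convex hull (X s ` {..<N})"
proof (induction t)
  case 0 then show ?case by simp
next
  case (Suc t)
  then show ?case using hull_mono_step[of t]
    by (metis le_Suc_eq order_refl order_trans)
qed

lemma pull:
  assumes i: "i < N" and j: "j < N" and M: "\<And>k. k < N \<Longrightarrow> inner u (X t k) \<le> M"
  shows "(f (X t i - X t j) * w j / W) * (M - inner u (X t j)) \<le> M - inner u (X (Suc t) i)"
proof -
  define a where "a k = f (X t i - X t k) * w k / Z t i" for k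
  have "inner u (X (Suc t) i) = (\<Sum>k<N. a k * inner u (X t k))"
    unfolding step_repr[OF i] a_def by (simp add: inner_sum_right)
  moreover have "M = (\<Sum>k<N. a k * M)"
  proof -
    have "(\<Sum>k<N. a k * M) = (\<Sum>k<N. a k) * M" by (simp add: sum_distrib_right)
    also have "(\<Sum>k<N. a k) = 1" using coeff_sum[OF i, of t] by (simp add: a_def)
    finally show ?thesis by simp
  qed
  ultimately have e: "M - inner u (X (Suc t) i) = (\<Sum>k<N. a k * (M - inner u (X t k)))"
    by (simp add: sum_subtractf right_diff_distrib)
  have "a j * (M - inner u (X t j)) \<le> (\<Sum>k<N. a k * (M - inner u (X t k)))"
  proof (rule member_le_sum)
    fix k assume "k \<in> {..<N} - {j}"
    then have k: "k < N" by auto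
    show "0 \<le> a k * (M - inner u (X t k))"
      using coeff_nonneg[OF i k, of t] M[OF k] unfolding a_def
      by (metis diff_ge_0_iff_ge mult_nonneg_nonneg)
  qed (use j in auto)
  moreover have "f (X t i - X t j) * w j / W \<le> a j"
    unfolding a_def
    by (rule divide_left_mono) (use Z_le[of t i] Z_pos[OF i, of t] f0 wpos[OF j] in \<open>auto intro!: mult_pos_pos\<close>)
  moreover have "0 \<le> M - inner u (X t j)" using M[OF j] by simp
  ultimately have h1: "(f (X t i - X t j) * w j / W) * (M - inner u (X t j)) \<le> a j * (M - inner u (X t j))"
    and h2: "a j * (M - inner u (X t j)) \<le> M - inner u (X (Suc t) i)"
    using e by (simp_all only: mult_right_mono)
  from h1 h2 show ?thesis by (rule order_trans)
qed


lemma cap_lemma: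
  assumes phi_f: "\<And>u. f u = phi (norm u)" and phi_mono: "\<And>r s. 0 \<le> r \<Longrightarrow> r \<le> s \<Longrightarrow> phi s \<le> phi r"
    and phi1: "\<And>r. 0 \<le> r \<Longrightarrow> phi r \<le> 1"
    and r: "r > 0" "phi r > 0"
    and v: "v extreme_point_of (\<Inter>t. convex hull (X t ` {..<N}))"
    and dl: "0 < dl" "2 * dl \<le> r"
  shows "\<exists>j<N. \<exists>T. \<forall>t\<ge>T. dist v (X t j) < dl"
proof -
  define H where "H t = convex hull (X t ` {..<N})" for t
  define K where "K = (\<Inter>t. H t)"
  have vK: "v \<in> K" using v unfolding K_def H_def extreme_point_of_def by simp
  have vH: "v \<in> H t" for t using vK unfolding K_def by auto
  have Npos: "N > 0"
  proof (rule ccontr)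
    assume "\<not> N > 0" then have "H 0 = {}" unfolding H_def by simp
    then show False using vH[of 0] by simp
  qed
  have Hanti: "s \<le> t \<Longrightarrow> H t \<subseteq> H s" for s t unfolding H_def by (rule hull_antimono)
  have Hcomp: "compact (H t)" for t unfolding H_def
    by (rule compact_convex_hull) (rule finite_imp_compact, simp)
  have Kconv: "convex K" unfolding K_def H_def by (auto intro!: convex_INT)
  have Kclosed: "closed K" unfolding K_def
    by (rule closed_INT) (use Hcomp compact_imp_closed in blast)
  have Kcomp: "compact K"
  proof -
    have "K = H 0 \<inter> K" unfolding K_def by auto
    then show ?thesis using compact_Int_closed[OF Hcomp[of 0] Kclosed] by simp
  qed
  define B where "B = K \<inter> - ball v dl"
  have Bcomp: "compact B" unfolding B_def using Kcomp by (auto intro!: compact_Int_closed)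
  have cBcomp: "compact (convex hull B)" using Bcomp by (rule compact_convex_hull)
  have vnB: "v \<notin> convex hull B"
  proof -
    have "convex (K - {v})" using extreme_point_of_stillconvex[OF Kconv] v
      unfolding K_def H_def by simp
    moreover have "B \<subseteq> K - {v}" unfolding B_def using dl by auto
    ultimately have "convex hull B \<subseteq> K - {v}" by (rule hull_minimal[rotated])
    then show ?thesis by auto
  qed
  obtain u0 b0 where u0: "inner u0 v < b0" "\<forall>y\<in>convex hull B. inner u0 y > b0"
    using separating_hyperplane_closed_point[OF convex_convex_hull compact_imp_closed[OF cBcomp] vnB]
    by blast
  define u where "u = - u0"
  define b where "b = - b0"
  define a where "a = inner u v"
  define g where "g = (a - b) / 2"
  have gpos: "g > 0" unfolding g_def a_def b_def u_def using u0 by simp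
  have uB: "y \<in> B \<Longrightarrow> inner u y < b" for y
    using u0(2) hull_inc[of y B] unfolding u_def b_def by force
  have capK: "y \<in> K \<Longrightarrow> a - g \<le> inner u y \<Longrightarrow> y \<in> ball v dl" for y
  proof (rule ccontr)
    assume "y \<in> K" "a - g \<le> inner u y" "y \<notin> ball v dl"
    then have "y \<in> B" unfolding B_def by auto
    then have "inner u y < b" by (rule uB)
    with \<open>a - g \<le> inner u y\<close> gpos show False unfolding g_def by argo
  qed
  define D where "D t = H t \<inter> ({y. a - g \<le> inner u y} \<inter> - ball v dl)" for t
  have "\<not> (\<forall>t. D t \<noteq> {})"
  proof
    assume ne: "\<forall>t. D t \<noteq> {}"
    have "\<Inter>(range D) \<noteq> {}"
    proof (rule compact_nest)
      show "compact (D t)" for t unfolding D_def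
        by (intro compact_Int_closed Hcomp closed_Int closed_halfspace_ge) auto
      show "D t \<noteq> {}" for t using ne by auto
      show "m \<le> n \<Longrightarrow> D n \<subseteq> D m" for m n unfolding D_def using Hanti by auto
    qed
    then obtain y where "\<forall>t. y \<in> D t" by auto
    then have "y \<in> K" "a - g \<le> inner u y" "y \<notin> ball v dl" unfolding D_def K_def by auto
    with capK show False by auto
  qed
  then obtain T0 where T0: "D T0 = {}" by auto
  have capH: "t \<ge> T0 \<Longrightarrow> y \<in> H t \<Longrightarrow> a - g \<le> inner u y \<Longrightarrow> dist v y < dl" for t y
  proof -
    assume "t \<ge> T0" "y \<in> H t" "a - g \<le> inner u y"
    then have "y \<in> H T0" using Hanti by auto
    with T0 \<open>a - g \<le> inner u y\<close> have "y \<in> ball v dl" unfolding D_def by auto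
    then show ?thesis by simp
  qed
  have Wpos: "W > 0" using Npos wpos by (intro sum_pos) auto
  define wmin where "wmin = Min (w ` {..<N})"
  have wmin_in: "wmin \<in> w ` {..<N}" unfolding wmin_def using Npos by (intro Min_in) auto
  have wmin_pos: "wmin > 0" using wmin_in wpos by auto
  have wmin_le: "j < N \<Longrightarrow> wmin \<le> w j" for j unfolding wmin_def by (intro Min_le) auto
  define c where "c = min (1/3) (phi r * wmin / W)"
  have cpos: "c > 0" unfolding c_def using r wmin_pos Wpos by simp
  have c3: "c \<le> 1/3" unfolding c_def by (rule min.cobounded1)
  have phir1: "phi r \<le> 1" using phi1 r by simp
  have cle1: "c \<le> phi r * w j / W" if j: "j < N" for j
  proof -
    have "phi r * wmin \<le> phi r * w j" using wmin_le[OF j] r by (intro mult_left_mono) auto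
    then have "phi r * wmin / W \<le> phi r * w j / W" using Wpos by (intro divide_right_mono) auto
    then show ?thesis unfolding c_def by simp
  qed
  have cle2: "c \<le> w j / W" if j: "j < N" for j
  proof -
    have "phi r * w j \<le> w j" using phir1 wpos[OF j] by (simp add: mult_left_le_one_le)
    then have "phi r * w j / W \<le> w j / W" using Wpos by (intro divide_right_mono) auto
    then show ?thesis using cle1[OF j] by simp
  qed
  define L where "L t = Max ((\<lambda>i. inner u (X t i)) ` {..<N})" for t
  have Lge: "i < N \<Longrightarrow> inner u (X t i) \<le> L t" for i t unfolding L_def by (intro Max_ge) auto
  have Latt: "\<exists>k<N. inner u (X t k) = L t" for t
  proof -
    have "L t \<in> (\<lambda>i. inner u (X t i)) ` {..<N}" unfolding L_def using Npos by (intro Max_in) auto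
    then show ?thesis by auto
  qed
  have hullL: "H t \<subseteq> {y. inner u y \<le> L t}" for t unfolding H_def
    by (rule hull_minimal) (use Lge convex_halfspace_le in auto)
  have La: "a \<le> L t" for t using hullL[of t] vH[of t] unfolding a_def by auto
  have Ldec: "L (Suc t) \<le> L t" for t
  proof -
    obtain k where k: "k < N" "inner u (X (Suc t) k) = L (Suc t)" using Latt by blast
    have "X (Suc t) k \<in> H t" unfolding H_def by (rule step_in_hull[OF k(1)])
    with hullL[of t] k show ?thesis by auto
  qed
  obtain l where lim: "L \<longlonglongrightarrow> l" using decseq_convergent[of L a] La Ldec
    by (metis decseq_SucI)
  have limd: "(\<lambda>t. L t - L (Suc t)) \<longlonglongrightarrow> l - l"
    by (intro tendsto_diff lim LIMSEQ_Suc[OF lim])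
  define e where "e = c * g / 2"
  have epos: "e > 0" unfolding e_def using cpos gpos by simp
  have eg: "e \<le> g / 2"
  proof -
    have "c * g \<le> 1 * g" using c3 gpos by (intro mult_right_mono) auto
    then show ?thesis unfolding e_def by simp
  qed
  have ce: "c * e < e" using c3 epos by simp
  have "eventually (\<lambda>t. L t - L (Suc t) < c * e) sequentially"
    using order_tendstoD(2)[OF limd] cpos epos by simp
  then obtain T1 where T1: "\<And>t. t \<ge> T1 \<Longrightarrow> L t - L (Suc t) < c * e"
    unfolding eventually_sequentially by blast
  define T where "T = max T0 T1"
  have XH: "i < N \<Longrightarrow> X t i \<in> H t" for i t unfolding H_def by (intro hull_inc) auto
  have claim1: "inner u (X t j) \<ge> L t - e"
    if t: "t \<ge> T" and j: "j < N" and jc: "inner u (X t j) \<ge> a - g" for t j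
  proof -
    obtain k where k: "k < N" "inner u (X (Suc t) k) = L (Suc t)" using Latt by blast
    have drop: "L t - L (Suc t) < c * e" using T1 t unfolding T_def by auto
    have pk: "(f (X t k - X t k) * w k / W) * (L t - inner u (X t k)) \<le> L t - L (Suc t)"
      using pull[OF k(1) k(1), of u t "L t"] Lge k(2) by simp
    have kc: "L t - inner u (X t k) < e"
    proof (rule ccontr)
      assume "\<not> ?thesis"
      then have h1: "c * e \<le> (w k / W) * (L t - inner u (X t k))"
        using cle2[OF k(1)] cpos epos by (intro mult_mono) auto
      have h2: "(w k / W) * (L t - inner u (X t k)) \<le> L t - L (Suc t)" using pk by (simp add: fz)
      from h1 h2 drop show False by linarith
    qed
    have dk: "dist v (X t k) < dl" using capH[of t "X t k"] t XH[OF k(1)] kc La[of t] eg gpos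
      unfolding T_def by auto
    have dj: "dist v (X t j) < dl" using capH[of t "X t j"] t XH[OF j] jc unfolding T_def by auto
    have "norm (X t k - X t j) \<le> r"
    proof -
      have "norm (X t k - X t j) \<le> dist v (X t k) + dist v (X t j)"
        by (metis dist_commute dist_norm dist_triangle)
      then show ?thesis using dk dj dl by linarith
    qed
    then have fkj: "f (X t k - X t j) \<ge> phi r"
      unfolding phi_f by (intro phi_mono) auto
    have pj: "(f (X t k - X t j) * w j / W) * (L t - inner u (X t j)) \<le> L t - L (Suc t)"
      using pull[OF k(1) j, of u t "L t"] Lge k(2) by simp
    show ?thesis
    proof (rule ccontr)
      assume "\<not> ?thesis"
      then have h: "e \<le> L t - inner u (X t j)" by simp
      have "c \<le> f (X t k - X t j) * w j / W"
      proof -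
        have "phi r * w j \<le> f (X t k - X t j) * w j" using fkj wpos[OF j] by (intro mult_right_mono) auto
        then have "phi r * w j / W \<le> f (X t k - X t j) * w j / W" using Wpos by (intro divide_right_mono) auto
        then show ?thesis using cle1[OF j] by simp
      qed
      then have h1: "c * e \<le> (f (X t k - X t j) * w j / W) * (L t - inner u (X t j))"
        using h cpos epos by (intro mult_mono) auto
      from h1 pj drop show False by linarith
    qed
  qed
  have claim2: "inner u (X (Suc t) i) < a - g"
    if t: "t \<ge> T" and i: "i < N" and ic: "inner u (X t i) < a - g" for t i
  proof (rule ccontr)
    assume "\<not> ?thesis"
    then have h: "a - g \<le> inner u (X (Suc t) i)" by simp
    have drop: "L t - L (Suc t) < c * e" using T1 t unfolding T_def by auto
    have pi: "(f (X t i - X t i) * w i / W) * (L t - inner u (X t i)) \<le> L t - inner u (X (Suc t) i)"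
      using pull[OF i i, of u t "L t"] Lge by simp
    have "c * g \<le> (w i / W) * (L t - inner u (X t i))"
      using cle2[OF i] cpos gpos ic La[of t] by (intro mult_mono) auto
    moreover have "(w i / W) * (L t - inner u (X t i)) \<le> L t - inner u (X (Suc t) i)"
      using pi by (simp add: fz)
    ultimately have h1: "inner u (X (Suc t) i) \<le> L t - c * g" by linarith
    have h2: "inner u (X (Suc t) i) \<ge> L (Suc t) - e"
      using claim1[of "Suc t" i] t i h by auto
    have h3: "c * g = 2 * e" unfolding e_def by simp
    from h1 h2 h3 drop ce show False by linarith
  qed
  define C where "C s = {i. i < N \<and> a - g \<le> inner u (X (T + s) i)}" for s
  have "\<exists>j T'. \<forall>s\<ge>T'. j \<in> C s"
  proof (rule nested_ne)
    show "finite (C s)" for s unfolding C_def by auto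
    show "C s \<noteq> {}" for s
    proof -
      obtain k where "k < N" "inner u (X (T + s) k) = L (T + s)" using Latt by blast
      then have "k \<in> C s" unfolding C_def using La[of "T + s"] gpos by auto
      then show ?thesis by auto
    qed
    show "C (Suc s) \<subseteq> C s" for s
    proof
      fix i assume "i \<in> C (Suc s)"
      then have i: "i < N" "a - g \<le> inner u (X (Suc (T + s)) i)" unfolding C_def by auto
      show "i \<in> C s"
      proof (rule ccontr)
        assume "i \<notin> C s"
        then have "inner u (X (T + s) i) < a - g" using i unfolding C_def by auto
        from claim2[OF _ i(1) this] i(2) show False by auto
      qed
    qed
  qed
  then obtain j T' where jT: "\<And>s. s \<ge> T' \<Longrightarrow> j \<in> C s" by blast
  have jN: "j < N" using jT[of T'] unfolding C_def by auto
  have "\<forall>t\<ge>T + T'. dist v (X t j) < dl"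
  proof (intro allI impI)
    fix t assume t: "t \<ge> T + T'"
    then have "j \<in> C (t - T)" by (intro jT) auto
    moreover have "T + (t - T) = t" using t by auto
    ultimately have "a - g \<le> inner u (X t j)" unfolding C_def by auto
    then show "dist v (X t j) < dl" using capH[of t "X t j"] XH[OF jN] t unfolding T_def by auto
  qed
  then show ?thesis using jN by blast
qed

lemma const_case:
  assumes fzero: "\<And>u. u \<noteq> 0 \<Longrightarrow> f u = 0"
  shows "i < N \<Longrightarrow> X t i = x i"
proof (induction t arbitrary: i)
  case 0 then show ?case by simp
next
  case (Suc t)
  have "X (Suc t) i = (\<Sum>j<N. (f (X t i - X t j) * w j / Z t i) *\<^sub>R X t j)"
    by (rule step_repr[OF Suc.prems])
  also have "\<dots> = (\<Sum>j<N. (f (X t i - X t j) * w j / Z t i) *\<^sub>R X t i)"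
  proof (rule sum.cong)
    fix j assume "j \<in> {..<N}"
    show "(f (X t i - X t j) * w j / Z t i) *\<^sub>R X t j = (f (X t i - X t j) * w j / Z t i) *\<^sub>R X t i"
    proof (cases "X t i = X t j")
      case False
      then have "f (X t i - X t j) = 0" by (intro fzero) auto
      then show ?thesis by simp
    qed simp
  qed simp
  also have "\<dots> = (\<Sum>j<N. f (X t i - X t j) * w j / Z t i) *\<^sub>R X t i"
    by (simp add: scaleR_sum_left)
  also have "\<dots> = X t i" using coeff_sum[OF Suc.prems] by simp
  also have "\<dots> = x i" using Suc by simp
  finally show ?case .
qed

end

theorem lemma2:
  fixes N :: nat and x :: "nat \<Rightarrow> 'a::euclidean_space" and w :: "nat \<Rightarrow> real"
    and f :: "'a \<Rightarrow> real" and v :: 'a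
  assumes "PDD f"
    and "\<And>j. j < N \<Longrightarrow> w j > 0"
    and "v extreme_point_of (\<Inter>t. convex hull ((\<lambda>i. bms N f w x t i) ` {..<N}))"
  shows "\<exists>j<N. (\<lambda>t. bms N f w x t j) \<longlonglongrightarrow> v"
proof -
  obtain phi :: "real \<Rightarrow> real" where
    fone: "\<And>u. f u = 1 \<longleftrightarrow> u = 0" and
    phi01: "\<And>r. r \<ge> 0 \<Longrightarrow> 0 \<le> phi r \<and> phi r \<le> 1" and
    phim: "\<And>r s. 0 \<le> r \<Longrightarrow> r \<le> s \<Longrightarrow> phi s \<le> phi r" and
    phif: "\<And>u. f u = phi (norm u)"
    using assms(1) unfolding PDD_def by blast
  interpret bsetup N f w x
  proof
    show "0 \<le> f u" for u using phif phi01[of "norm u"] by simp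
    show "f u \<le> 1" for u using phif phi01[of "norm u"] by simp
    show "f 0 = 1" using fone by simp
    show "j < N \<Longrightarrow> w j > 0" for j by (rule assms(2))
  qed
  show ?thesis
  proof (cases "\<exists>r>0. phi r > 0")
    case True
    then obtain r where r: "r > 0" "phi r > 0" by blast
    show ?thesis
    proof (rule ccontr)
      assume nc: "\<not> ?thesis"
      have "\<forall>j\<in>{..<N}. \<exists>E>0. \<forall>T. \<exists>t\<ge>T. E \<le> dist v (X t j)"
      proof
        fix j assume "j \<in> {..<N}"
        then have "\<not> (\<lambda>t. X t j) \<longlonglongrightarrow> v" using nc by auto
        then show "\<exists>E>0. \<forall>T. \<exists>t\<ge>T. E \<le> dist v (X t j)"
          unfolding lim_sequentially by (auto simp: dist_commute not_less)
      qed
      then obtain E where E: "\<And>j. j \<in> {..<N} \<Longrightarrow> E j > 0 \<and> (\<forall>T. \<exists>t\<ge>T. E j \<le> dist v (X t j))"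
        by metis
      define dl where "dl = Min (insert (r/2) (E ` {..<N}))"
      have "dl \<in> insert (r/2) (E ` {..<N})" unfolding dl_def by (intro Min_in) auto
      then have dlpos: "dl > 0" using E r by auto
      have dlr: "2 * dl \<le> r" using Min_le[of "insert (r/2) (E ` {..<N})" "r/2"] unfolding dl_def by auto
      have dlE: "j < N \<Longrightarrow> dl \<le> E j" for j unfolding dl_def by (intro Min_le) auto
      obtain j T where j: "j < N" and T: "\<And>t. t \<ge> T \<Longrightarrow> dist v (X t j) < dl"
        using cap_lemma[OF phif phim _ r assms(3) dlpos dlr] phi01 by blast
      obtain t where "t \<ge> T" "E j \<le> dist v (X t j)" using E[of j] j by auto
      with T[of t] dlE[OF j] show False by simp
    qed
  next
    case False
    have fzero: "f u = 0" if "u \<noteq> 0" for u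
    proof -
      have "norm u > 0" using that by simp
      then have "phi (norm u) \<le> 0" using False by (meson not_less)
      then show ?thesis using phif phi01[of "norm u"] by simp
    qed
    have eq: "(\<Inter>t. convex hull (X t ` {..<N})) = convex hull (x ` {..<N})"
    proof -
      have "convex hull (X t ` {..<N}) = convex hull (x ` {..<N})" for t
        using const_case[OF fzero] by (metis (mono_tags, lifting) image_cong lessThan_iff)
      then show ?thesis by simp
    qed
    have "v \<in> x ` {..<N}" using assms(3) eq extreme_point_of_convex_hull by metis
    then obtain j where j: "j < N" "v = x j" by auto
    have "(\<lambda>t. X t j) = (\<lambda>t. v)" using const_case[OF fzero j(1)] j(2) by auto
    then show ?thesis using j(1) by auto
  qed
qed

end
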